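(* Fix an integer $k\ge 2$. For all but $O_k(N^{k-1})$ choices of positive integers $n_1<\cdots<n_k\le N$, the following holds for $F(x)=1+x^{n_1}+\cdots+x^{n_k}$: if $G(x)$ is any $0,1$-polynomial with the same number of terms as $F(x)$ (namely $k+1$) satisfying $F(x)\tilde F(x)=G(x)\tilde G(x)$, then $G(x)\in\{F(x),\tilde F(x)\}$.
   Context: A $0,1$-polynomial is a polynomial each of whose coefficients is $0$ or $1$. For nonzero $f(x)\in\mathbb{R}[x]$, $\tilde f(x)=x^{\deg f}f(1/x)$. The implied constant depends only on $k$. *)

theory Defs
  imports "HOL-Computational_Algebra.Polynomial"
begin

definition zero_one_poly :: "real poly \<Rightarrow> bool" where
  "zero_one_poly p \<longleftrightarrow> (\<forall>i. coeff p i = 0 \<or> coeff p i = 1)"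

definition num_terms :: "real poly \<Rightarrow> nat" where
  "num_terms p = card {i. coeff p i \<noteq> 0}"

definition F_of :: "nat set \<Rightarrow> real poly" where
  "F_of S = 1 + (\<Sum>n\<in>S. monom 1 n)"

text \<open>The reciprocal polynomial x^(deg f) f(1/x) is the library's reflect_poly.\<close>
definition good_set :: "nat \<Rightarrow> nat set \<Rightarrow> bool" where
  "good_set k S \<longleftrightarrow> (\<forall>G. zero_one_poly G \<and> num_terms G = k + 1 \<and>
      F_of S * reflect_poly (F_of S) = G * reflect_poly G
      \<longrightarrow> G = F_of S \<or> G = reflect_poly (F_of S))"

end

theory Submission imports Defs begin

definition gen :: "nat set \<Rightarrow> bool" where
  "gen S \<longleftrightarrow> (\<forall>c\<in>S. \<forall>\<mu>\<in>{1,2,3::nat}. \<forall>y1\<in>insert 0 (S-{c}). \<forall>y2\<in>insert 0 (S-{c}).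
     \<forall>y3\<in>insert 0 (S-{c}). \<forall>z1\<in>insert 0 (S-{c}). \<forall>z2\<in>insert 0 (S-{c}).
     \<mu>*c + z1 + z2 \<noteq> y1 + y2 + y3)"

lemma genD:
  assumes "gen S" "c \<in> S" "\<mu> \<in> {1,2,3}"
    "y1\<in>insert 0 (S-{c})" "y2\<in>insert 0 (S-{c})" "y3\<in>insert 0 (S-{c})"
    "z1\<in>insert 0 (S-{c})" "z2\<in>insert 0 (S-{c})"
  shows "\<mu>*c + z1 + z2 \<noteq> y1 + y2 + y3"
  using assms unfolding gen_def by blast

lemma R1:
  assumes g: "gen S" and p: "p \<in> insert 0 S" and q: "q \<in> insert 0 S"
    and p': "p' \<in> insert 0 S" and q': "q' \<in> insert 0 S"
    and lt: "q < p" "q' < p'" and eq: "p + q' = p' + q"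
  shows "p = p' \<and> q = q'"
proof -
  have main: False if "gen S" "p \<in> insert 0 S" "q \<in> insert 0 S" "p' \<in> insert 0 S" "q' \<in> insert 0 S"
     "q < p" "q' < p'" "p + q' = p' + q" "p' < p" for p q p' q'
  proof -
    have pS: "p \<in> S" using that by auto
    have "1*p + q' + 0 \<noteq> p' + q + 0"
      by (rule genD[OF that(1) pS]) (use that in auto)
    then show False using that by simp
  qed
  show ?thesis
  proof (cases "p = p'")
    case True then show ?thesis using eq by simp
  next
    case False
    then have "p' < p \<or> p < p'" by auto
    then show ?thesis
      using main[OF g p q p' q' lt eq] main[OF g p' q' p q lt(2) lt(1)] eq by auto
  qed
qed

lemma R2:
  assumes g: "gen S" and mem: "p \<in> insert 0 S" "q \<in> insert 0 S" "r \<in> insert 0 S"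
    "s \<in> insert 0 S" "e \<in> insert 0 S" "f \<in> insert 0 S"
    and lt: "q < p" "s < r" "f < e" and eq: "p + s + f = q + r + e"
  shows "p = r \<or> q = s"
proof (rule ccontr)
  assume nc: "\<not> (p = r \<or> q = s)"
  show False
  proof (cases "p = e")
    case True
    then have "r + q = f + s" using eq by simp
    from R1[OF g mem(3) mem(4) mem(6) mem(2) lt(2) _ this] have "r = f \<and> s = q"
      using eq lt True by linarith
    then show False using nc by simp
  next
    case pe: False
    consider "r < p" "e < p" | "p < r" "e < r" | "p < e" "r \<le> e" using nc pe by linarith
    then show False
    proof cases
      case 1
      have pS: "p \<in> S" using 1 mem by auto
      have "1*p + s + f \<noteq> q + r + e"
        by (rule genD[OF g pS]) (use 1 mem lt in auto)
      then show False using eq by simp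
    next
      case 2
      have rS: "r \<in> S" using 2 mem by auto
      have "1*r + q + e \<noteq> p + s + f"
        by (rule genD[OF g rS]) (use 2 mem lt in auto)
      then show False using eq by simp
    next
      case 3
      have eS: "e \<in> S" using 3 mem by auto
      show False
      proof (cases "r = e")
        case True
        have "2*e + q + 0 \<noteq> p + s + f"
          by (rule genD[OF g eS]) (use 3 True mem lt in auto)
        then show False using eq True by simp
      next
        case False
        have "1*e + q + r \<noteq> p + s + f"
          by (rule genD[OF g eS]) (use 3 False mem lt in auto)
        then show False using eq by simp
      qed
    qed
  qed
qed

lemma core:
  assumes g: "gen S" and fin: "finite S" and S0: "0 \<notin> S"
    and A_def: "A = insert 0 S" and dpos: "0 < d" and dA: "d \<in> A" and Ale: "\<forall>a\<in>A. a \<le> d"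
    and Bfin: "finite B" and cardB: "card B = card A" and B0: "0 \<in> B" and Bd: "d \<in> B"
    and Ble: "\<forall>b\<in>B. b \<le> d"
    and diff: "\<forall>i\<in>B. \<forall>j\<in>B. j < i \<longrightarrow> (\<exists>e\<in>A. \<exists>f\<in>A. f < e \<and> i + f = e + j)"
  shows "B = A \<or> B = (\<lambda>x. d - x) ` A"
proof -
  have ex: "\<exists>p q. p \<in> A \<and> q \<in> A \<and> q < p \<and> b + q = p" if bb: "b \<in> B" "0 < b" for b
  proof -
    obtain e f where "e \<in> A" "f \<in> A" "f < e" "b + f = e + 0" using diff[rule_format, OF bb(1) B0 bb(2)] by blast
    then show ?thesis by auto
  qed
  define h where "h b = (SOME p. \<exists>q. p \<in> A \<and> q \<in> A \<and> q < p \<and> b + q = p)" for b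
  define t where "t b = (SOME q. h b \<in> A \<and> q \<in> A \<and> q < h b \<and> b + q = h b)" for b
  have ht: "h b \<in> A \<and> t b \<in> A \<and> t b < h b \<and> b + t b = h b" if "b \<in> B" "0 < b" for b
  proof -
    have "\<exists>q. h b \<in> A \<and> q \<in> A \<and> q < h b \<and> b + q = h b"
      unfolding h_def by (rule someI_ex) (rule ex[OF that])
    then show ?thesis unfolding t_def by (rule someI_ex)
  qed
  have uniq: "h b = p \<and> t b = q" if "b \<in> B" "0 < b" "p \<in> A" "q \<in> A" "q < p" "b + q = p" for b p q
  proof -
    have "h b = p \<and> t b = q"
      using R1[OF g, of "h b" "t b" p q] ht[OF that(1,2)] that A_def by auto
    then show ?thesis .
  qed
  have hd: "h d = d" and td: "t d = 0"
    using uniq[OF Bd dpos dA _ dpos] A_def by auto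
  have pair: "h b = h b' \<or> t b = t b'" if bb: "b \<in> B" "b' \<in> B" "0 < b" "0 < b'" "b' < b" for b b'
  proof -
    obtain e f where ef: "e \<in> A" "f \<in> A" "f < e" "b + f = e + b'" using diff[rule_format, OF bb(1,2,5)] by blast
    have "h b + t b' + f = t b + h b' + e" using ht[OF bb(1,3)] ht[OF bb(2,4)] ef by linarith
    then show ?thesis
      using R2[OF g, of "h b" "t b" "h b'" "t b'" e f] ht[OF bb(1,3)] ht[OF bb(2,4)] ef A_def by auto
  qed
  have pair': "h b = h b' \<or> t b = t b'" if "b \<in> B" "b' \<in> B" "0 < b" "0 < b'" for b b'
  proof (cases "b' < b")
    case True then show ?thesis using pair[OF that True] by blast
  next
    case False
    show ?thesis
    proof (cases "b = b'")
      case True then show ?thesis by simp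
    next
      case ne: False
      with False have "b < b'" by simp
      then show ?thesis using pair[OF that(2,1,4,3)] by auto
    qed
  qed
  have finA: "finite A" using fin A_def by simp
  show ?thesis
  proof (cases "\<forall>b\<in>B. 0 < b \<longrightarrow> t b = 0")
    case True
    have "B \<subseteq> A"
    proof
      fix b assume b: "b \<in> B"
      show "b \<in> A"
      proof (cases "b = 0")
        case True then show ?thesis using A_def by simp
      next
        case False then show ?thesis using ht[OF b] True b by auto
      qed
    qed
    then have "B = A" using card_subset_eq[OF finA, of B] cardB by simp
    then show ?thesis by simp
  next
    case False
    then obtain b1 where b1: "b1 \<in> B" "0 < b1" "t b1 \<noteq> 0" by blast
    show ?thesis
    proof (cases "\<forall>b\<in>B. 0 < b \<longrightarrow> h b = d")
      case True
      have "B \<subseteq> (\<lambda>x. d - x) ` A"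
      proof
        fix b assume b: "b \<in> B"
        show "b \<in> (\<lambda>x. d - x) ` A"
        proof (cases "b = 0")
          case True then show ?thesis using dA by force
        next
          case False
          then have "b = d - t b" "t b \<in> A" using ht[OF b] True b by auto
          then show ?thesis by blast
        qed
      qed
      moreover have "inj_on (\<lambda>x. d - x) A" by (rule inj_onI) (metis Ale diff_diff_cancel)
      then have "card ((\<lambda>x. d - x) ` A) = card B" using cardB by (simp add: card_image)
      ultimately have "B = (\<lambda>x. d - x) ` A" using card_subset_eq[of "(\<lambda>x. d - x) ` A" B] finA by simp
      then show ?thesis by simp
    next
      case False
      then obtain b2 where b2: "b2 \<in> B" "0 < b2" "h b2 \<noteq> d" by blast
      have "h b1 = d" using pair'[OF b1(1) Bd b1(2) dpos] hd td b1 by auto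
      moreover have "t b2 = 0" using pair'[OF b2(1) Bd b2(2) dpos] hd td b2 by auto
      ultimately show ?thesis using pair'[OF b1(1) b2(1) b1(2) b2(2)] b1 b2 by auto
    qed
  qed
qed

lemma coeff_F:
  assumes "finite S" "0 \<notin> S"
  shows "coeff (F_of S) i = (if i \<in> insert 0 S then 1 else 0)"
proof -
  have "coeff (F_of S) i = (if i = 0 then 1 else 0) + (\<Sum>n\<in>S. if n = i then 1 else 0)"
    unfolding F_of_def by (simp add: coeff_sum coeff_monom)
  also have "(\<Sum>n\<in>S. (if n = i then 1 else 0::real)) = (if i \<in> S then 1 else 0)"
    using assms(1) by (simp add: sum.delta)
  finally show ?thesis using assms(2) by auto
qed

lemma coeff_mult_nonneg_nz:
  fixes p q :: "real poly"
  assumes "\<forall>i. coeff p i \<ge> 0" "\<forall>i. coeff q i \<ge> 0"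
  shows "coeff (p * q) n \<noteq> 0 \<longleftrightarrow> (\<exists>i\<le>n. coeff p i \<noteq> 0 \<and> coeff q (n - i) \<noteq> 0)"
proof -
  have "coeff (p * q) n = 0 \<longleftrightarrow> (\<forall>i\<in>{..n}. coeff p i * coeff q (n-i) = 0)"
    unfolding coeff_mult by (rule sum_nonneg_eq_0_iff) (use assms in auto)
  then show ?thesis by auto
qed

lemma supp_refl_prod:
  fixes p :: "real poly"
  assumes nn: "\<forall>i. coeff p i \<ge> 0"
  shows "coeff (p * reflect_poly p) n \<noteq> 0 \<longleftrightarrow>
     (\<exists>i j. coeff p i \<noteq> 0 \<and> coeff p j \<noteq> 0 \<and> n = i + (degree p - j))"
proof -
  have nn2: "\<forall>i. coeff (reflect_poly p) i \<ge> 0" using nn by (simp add: coeff_reflect_poly)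
  have le: "j \<le> degree p" if "coeff p j \<noteq> 0" for j using that le_degree by blast
  show ?thesis
  proof
    assume "coeff (p * reflect_poly p) n \<noteq> 0"
    then obtain i where i: "i \<le> n" "coeff p i \<noteq> 0" "coeff (reflect_poly p) (n - i) \<noteq> 0"
      using coeff_mult_nonneg_nz[OF nn nn2] by blast
    then have "n - i \<le> degree p" "coeff p (degree p - (n - i)) \<noteq> 0"
      by (auto simp: coeff_reflect_poly split: if_splits)
    then show "\<exists>i j. coeff p i \<noteq> 0 \<and> coeff p j \<noteq> 0 \<and> n = i + (degree p - j)"
      using i by (intro exI[of _ i] exI[of _ "degree p - (n - i)"]) auto
  next
    assume "\<exists>i j. coeff p i \<noteq> 0 \<and> coeff p j \<noteq> 0 \<and> n = i + (degree p - j)"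
    then obtain i j where ij: "coeff p i \<noteq> 0" "coeff p j \<noteq> 0" "n = i + (degree p - j)" by blast
    have "j \<le> degree p" using le ij by blast
    then have "coeff (reflect_poly p) (n - i) \<noteq> 0" using ij by (simp add: coeff_reflect_poly)
    then show "coeff (p * reflect_poly p) n \<noteq> 0"
      unfolding coeff_mult_nonneg_nz[OF nn nn2] using ij by (intro exI[of _ i]) auto
  qed
qed

lemma good:
  assumes fin: "finite S" and S0: "0 \<notin> S" and Sne: "S \<noteq> {}" and cS: "card S = k" and g: "gen S"
  shows "good_set k S"
  unfolding good_set_def
proof (intro allI impI)
  fix G assume asm: "zero_one_poly G \<and> num_terms G = k + 1 \<and>
      F_of S * reflect_poly (F_of S) = G * reflect_poly G"
  define A where "A = insert 0 S"
  define F where "F = F_of S"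
  define B where "B = {i. coeff G i \<noteq> 0}"
  have cF: "coeff F i = (if i \<in> A then 1 else 0)" for i
    unfolding F_def A_def using coeff_F[OF fin S0] .
  have cG: "coeff G i = (if i \<in> B then 1 else 0)" for i
    using asm unfolding zero_one_poly_def B_def by (cases "coeff G i = 0") auto
  have finA: "finite A" and cardA: "card A = k + 1" using fin S0 cS by (auto simp: A_def)
  have cardB: "card B = k + 1" using asm unfolding num_terms_def B_def by simp
  then have finB: "finite B" and Bne: "B \<noteq> {}" using card_ge_0_finite[of B] by auto
  have F0: "F \<noteq> 0" using cF[of 0] by (auto simp: A_def)
  define d where "d = degree F"
  define m where "m = degree G"
  have Ale: "\<forall>a\<in>A. a \<le> d" proof
    fix a assume "a \<in> A" then have "coeff F a \<noteq> 0" using cF by simp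
    then show "a \<le> d" unfolding d_def by (rule le_degree)
  qed
  have Ble: "\<forall>b\<in>B. b \<le> m" proof
    fix a assume "a \<in> B" then have "coeff G a \<noteq> 0" using cG by simp
    then show "a \<le> m" unfolding m_def by (rule le_degree)
  qed
  have dA: "d \<in> A" proof -
    have "coeff F d \<noteq> 0" using F0 unfolding d_def by simp
    then show ?thesis using cF[of d] by (simp split: if_splits)
  qed
  have G0: "G \<noteq> 0" using Bne B_def by auto
  have mB: "m \<in> B" using G0 unfolding m_def B_def by simp
  obtain s where s: "s \<in> S" using Sne by blast
  have dpos: "0 < d" proof -
    have "s \<le> d" using Ale s A_def by auto
    moreover have "s \<noteq> 0"
    proof
      assume "s = 0" then show False using s S0 by simp
    qed
    ultimately show ?thesis by simp
  qed
  have nnF: "\<forall>i. coeff F i \<ge> 0" using cF by simp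
  have nnG: "\<forall>i. coeff G i \<ge> 0" using cG by simp
  have key: "(\<exists>i\<in>A. \<exists>j\<in>A. n = i + (d - j)) \<longleftrightarrow> (\<exists>i\<in>B. \<exists>j\<in>B. n = i + (m - j))" for n
  proof -
    have "(\<exists>i\<in>A. \<exists>j\<in>A. n = i + (d - j)) \<longleftrightarrow> coeff (F * reflect_poly F) n \<noteq> 0"
      unfolding supp_refl_prod[OF nnF] d_def using cF by auto
    also have "F * reflect_poly F = G * reflect_poly G" using asm F_def by simp
    also have "coeff (G * reflect_poly G) n \<noteq> 0 \<longleftrightarrow> (\<exists>i\<in>B. \<exists>j\<in>B. n = i + (m - j))"
      unfolding supp_refl_prod[OF nnG] m_def B_def by auto
    finally show ?thesis .
  qed
  have "\<exists>i\<in>A. \<exists>j\<in>A. 0 = i + (d - j)" using dA A_def by (intro bexI[of _ 0] bexI[of _ d]) auto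
  then have "\<exists>i\<in>B. \<exists>j\<in>B. 0 = i + (m - j)" using key[of 0] by blast
  then have B0: "0 \<in> B" by auto
  have "\<exists>i\<in>B. \<exists>j\<in>B. m + m = i + (m - j)" using mB B0 by (intro bexI[of _ m] bexI[of _ 0]) auto
  then have "\<exists>i\<in>A. \<exists>j\<in>A. m + m = i + (d - j)" using key[of "m+m"] by blast
  then have md: "m \<le> d" using Ale by fastforce
  have "\<exists>i\<in>A. \<exists>j\<in>A. d + d = i + (d - j)" using dA A_def by (intro bexI[of _ d] bexI[of _ 0]) auto
  then have "\<exists>i\<in>B. \<exists>j\<in>B. d + d = i + (m - j)" using key[of "d+d"] by blast
  then have dm: "d \<le> m" using Ble by fastforce
  have md': "m = d" using md dm by simp
  have diff: "\<forall>i\<in>B. \<forall>j\<in>B. j < i \<longrightarrow> (\<exists>e\<in>A. \<exists>f\<in>A. f < e \<and> i + f = e + j)"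
  proof (intro ballI impI)
    fix i j assume ij: "i \<in> B" "j \<in> B" "j < i"
    then obtain e f where ef: "e \<in> A" "f \<in> A" "i + (d - j) = e + (d - f)"
      using key[of "i + (m - j)"] md' by blast
    have "j \<le> d" "f \<le> d" using ij ef Ble Ale md' by auto
    then have "i + f = e + j" "f < e" using ef ij by auto
    then show "\<exists>e\<in>A. \<exists>f\<in>A. f < e \<and> i + f = e + j" using ef by blast
  qed
  have "B = A \<or> B = (\<lambda>x. d - x) ` A"
    by (rule core[OF g fin S0 A_def dpos dA Ale finB _ B0]) (use cardB cardA mB md' Ble diff in auto)
  then show "G = F_of S \<or> G = reflect_poly (F_of S)"
  proof
    assume "B = A"
    then have "G = F" by (simp add: poly_eq_iff cF cG)
    then show ?thesis using F_def by simp
  next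
    assume BA: "B = (\<lambda>x. d - x) ` A"
    have "coeff G n = coeff (reflect_poly F) n" for n
    proof -
      have "n \<in> B \<longleftrightarrow> n \<le> d \<and> d - n \<in> A" using BA Ale
        by (auto simp: image_iff) (metis diff_diff_cancel)
      then show ?thesis by (simp add: cG cF coeff_reflect_poly d_def[symmetric])
    qed
    then have "G = reflect_poly F" by (simp add: poly_eq_iff)
    then show ?thesis using F_def by simp
  qed
qed

definition candT :: "nat set \<Rightarrow> nat set" where
  "candT T = (\<lambda>(\<mu>,y1,y2,y3,z1,z2). (y1+y2+y3 - z1 - z2) div \<mu>) `
     ({1,2,3::nat} \<times> (insert 0 T \<times> (insert 0 T \<times> (insert 0 T \<times> (insert 0 T \<times> insert 0 T)))))"

lemma nongen_mem:
  assumes "S \<subseteq> {1..N}" "card S = k" "\<not> gen S"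
  shows "S \<in> (\<Union>T\<in>{T. T \<subseteq> {1..N} \<and> card T = k - 1}. (\<lambda>c. insert c T) ` candT T)"
proof -
  obtain c \<mu> y1 y2 y3 z1 z2 where c: "c \<in> S" "\<mu> \<in> {1,2,3}"
    "y1\<in>insert 0 (S-{c})" "y2\<in>insert 0 (S-{c})" "y3\<in>insert 0 (S-{c})"
    "z1\<in>insert 0 (S-{c})" "z2\<in>insert 0 (S-{c})" "\<mu>*c + z1 + z2 = y1 + y2 + y3"
  proof -
    have "\<exists>c\<in>S. \<exists>\<mu>\<in>{1,2,3::nat}. \<exists>y1\<in>insert 0 (S-{c}). \<exists>y2\<in>insert 0 (S-{c}).
     \<exists>y3\<in>insert 0 (S-{c}). \<exists>z1\<in>insert 0 (S-{c}). \<exists>z2\<in>insert 0 (S-{c}).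
     \<mu>*c + z1 + z2 = y1 + y2 + y3" using assms(3) unfolding gen_def by (simp only: Set.ball_simps(10) not_not)
    then show ?thesis by - (elim bexE, rule that, assumption+)
  qed
  define T where "T = S - {c}"
  have fin: "finite S" using assms(1) finite_subset by blast
  have T1: "T \<subseteq> {1..N}" using assms(1) T_def by auto
  have T2: "card T = k - 1" using c(1) fin assms(2) T_def by simp
  have e: "y1+y2+y3 - z1 - z2 = \<mu>*c" using c(8) by linarith
  have mp: "0 < \<mu>" using c(2) by auto
  have "(y1+y2+y3 - z1 - z2) div \<mu> = c" unfolding e using mp by simp
  moreover have "(\<mu>,y1,y2,y3,z1,z2) \<in> {1,2,3::nat} \<times> (insert 0 T \<times> (insert 0 T \<times> (insert 0 T \<times> (insert 0 T \<times> insert 0 T))))"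
    using c(2-7) unfolding T_def by (simp only: mem_Times_iff fst_conv snd_conv)
  ultimately have "c \<in> candT T" unfolding candT_def
    by (intro image_eqI[of _ _ "(\<mu>,y1,y2,y3,z1,z2)"]) simp_all
  moreover have "S = insert c T" using c(1) T_def by auto
  ultimately show ?thesis using T1 T2 by blast
qed

lemma finite_candT: "finite T \<Longrightarrow> finite (candT T)"
  unfolding candT_def by (intro finite_imageI finite_cartesian_product) simp_all

lemma card_candT:
  assumes "finite T"
  shows "card (candT T) \<le> 3 * (card T + 1) ^ 5"
proof -
  let ?A = "insert 0 T"
  have "card (candT T) \<le> card ({1,2,3::nat} \<times> (?A \<times> (?A \<times> (?A \<times> (?A \<times> ?A)))))"
    unfolding candT_def by (rule card_image_le) (use assms in simp)
  also have "\<dots> = card {1,2,3::nat} * (card ?A * (card ?A * (card ?A * (card ?A * card ?A))))"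
    by (simp only: card_cartesian_product)
  also have "\<dots> = 3 * card ?A ^ 5" by (simp add: eval_nat_numeral)
  also have "\<dots> \<le> 3 * (card T + 1) ^ 5" using assms by (simp add: card_insert_le_m1 card_insert_if)
  finally show ?thesis .
qed

theorem mainTheorem4:
  fixes k :: nat
  assumes "k \<ge> 2"
  shows "\<exists>C::real. \<forall>N::nat.
    real (card {S. S \<subseteq> {1..N} \<and> card S = k \<and> \<not> good_set k S}) \<le> C * real N ^ (k - 1)"
proof (intro exI allI)
  fix N :: nat
  define Ts where "Ts = {T. T \<subseteq> {1..N} \<and> card T = k - 1}"
  define U where "U = (\<Union>T\<in>Ts. (\<lambda>c. insert c T) ` candT T)"
  have finTs: "finite Ts" unfolding Ts_def by simp
  have sub: "{S. S \<subseteq> {1..N} \<and> card S = k \<and> \<not> good_set k S} \<subseteq> U"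
  proof
    fix S assume "S \<in> {S. S \<subseteq> {1..N} \<and> card S = k \<and> \<not> good_set k S}"
    then have S: "S \<subseteq> {1..N}" "card S = k" "\<not> good_set k S" by auto
    have fin: "finite S" using S(1) finite_subset by blast
    have S0: "0 \<notin> S" using S(1) by auto
    have Sne: "S \<noteq> {}" using S(2) assms by auto
    have "\<not> gen S" using good[OF fin S0 Sne S(2)] S(3) by blast
    then show "S \<in> U" using nongen_mem[OF S(1,2)] unfolding U_def Ts_def by blast
  qed
  have finU: "finite U" unfolding U_def
  proof (rule finite_UN_I[OF finTs])
    fix T assume "T \<in> Ts" then have "finite T" unfolding Ts_def using finite_subset by auto
    then show "finite ((\<lambda>c. insert c T) ` candT T)" by (intro finite_imageI finite_candT)
  qed
  have "card U \<le> (\<Sum>T\<in>Ts. card ((\<lambda>c. insert c T) ` candT T))"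
    unfolding U_def by (rule card_UN_le[OF finTs])
  also have "\<dots> \<le> (\<Sum>T\<in>Ts. 3 * k ^ 5)"
  proof (rule sum_mono)
    fix T assume T: "T \<in> Ts"
    then have finT: "finite T" and cT: "card T = k - 1" unfolding Ts_def using finite_subset by auto
    have "card ((\<lambda>c. insert c T) ` candT T) \<le> card (candT T)" by (rule card_image_le) (rule finite_candT[OF finT])
    also have "\<dots> \<le> 3 * (card T + 1) ^ 5" by (rule card_candT[OF finT])
    also have "card T + 1 = k" using cT assms by simp
    finally show "card ((\<lambda>c. insert c T) ` candT T) \<le> 3 * k ^ 5" .
  qed
  also have "\<dots> = card Ts * (3 * k ^ 5)" by simp
  also have "card Ts = N choose (k - 1)" unfolding Ts_def using n_subsets[of "{1..N}" "k-1"] by simp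
  finally have cU: "card U \<le> (N choose (k - 1)) * (3 * k ^ 5)" .
  have ch: "N choose (k - 1) \<le> N ^ (k - 1)"
  proof (cases "k - 1 \<le> N")
    case True then show ?thesis by (rule binomial_le_pow)
  next
    case False then show ?thesis by (simp add: binomial_eq_0)
  qed
  have "card {S. S \<subseteq> {1..N} \<and> card S = k \<and> \<not> good_set k S} \<le> card U"
    by (rule card_mono[OF finU sub])
  also have "\<dots> \<le> N ^ (k - 1) * (3 * k ^ 5)" using cU ch mult_le_mono1 order_trans by blast
  finally have "card {S. S \<subseteq> {1..N} \<and> card S = k \<and> \<not> good_set k S} \<le> N ^ (k - 1) * (3 * k ^ 5)" .
  then have "real (card {S. S \<subseteq> {1..N} \<and> card S = k \<and> \<not> good_set k S}) \<le> real (N ^ (k - 1) * (3 * k ^ 5))"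
    by (simp only: of_nat_le_iff)
  then show "real (card {S. S \<subseteq> {1..N} \<and> card S = k \<and> \<not> good_set k S}) \<le> real (3 * k ^ 5) * real N ^ (k - 1)"
    by (simp add: mult.commute)
qed

end
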